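(* Under the three-receiver coding module below, at the beginning of any slot $t>0$, at least one receiver has decoded all of the packets $\mathbf{p}_1,\dots,\mathbf{p}_{m(t)}$, where $m(t)$ is the maximum rank among the three receivers at the beginning of slot $t$.
   Context: A sender broadcasts packets $\mathbf{p}_1,\mathbf{p}_2,\dots$ (indexed by arrival order, vectors over $\mathbb{F}_3$) to three receivers $1,2,3$ over a slotted erasure broadcast channel; each slot it transmits at most one linear combination of arrived packets, each receiver either receives it or suffers an erasure, and perfect feedback gives the sender every receiver's knowledge. The rank of a receiver is the dimension of the space of linear combinations it knows. Receiver $i$ has heard of a packet if it knows some linear combination involving that packet (with nonzero coefficient); $H_i$ is the set of packets it has heard of and $D_i$ the set it has decoded. "Oldest" means smallest index. Coding module: labels $L,N,D$ form a permutation of $\{1,2,3\}$; initially $L=1,N=2,D=3,m=0$. Each slot: let $U=\{\mathbf{p}_1,\dots,\mathbf{p}_m\}$ together with $\mathbf{p}_{m+1}$ if it has arrived, and set $S_1=D_N\cap D_D$, $S_2=D_N\cap(H_D\setminus D_D)$, $S_3=D_N\setminus H_D$, $S_4=D_D\setminus D_N$, $S_5=(H_D\setminus D_D)\setminus D_N$, $S_6=U\setminus(H_D\cup D_N)$. Transmit: Case 1 ($\mathbf{p}_{m+1}$ not arrived): if $S_2,S_4$ both nonempty send the sum of their oldest packets; else if $S_3,S_4$ both nonempty send the sum of their oldest packets; else send the oldest packet of the first nonempty set among $S_5,S_6,S_2,S_3,S_4$; if all are empty send nothing. Case 2 ($\mathbf{p}_{m+1}\in S_1$): send $\mathbf{p}_{m+1}$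 plus whatever Case 1 would send. Case 3 ($\mathbf{p}_{m+1}\in S_2$): send $\mathbf{p}_{m+1}+c\mathbf{p}$ with $\mathbf{p}$ the oldest packet of the first nonempty set among $S_4,S_5,S_6$, where $c=1$ unless $\mathbf{p}\in S_5$, in which case $c\in\{1,2\}$ is chosen so that the combination is innovative to receiver $D$. Case 4 ($\mathbf{p}_{m+1}\in S_3$): send $\mathbf{p}_{m+1}+\mathbf{p}$, $\mathbf{p}$ the oldest packet of the first nonempty set among $S_4,S_5,S_6$. Case 5 ($\mathbf{p}_{m+1}\in S_4$): send $\mathbf{p}_{m+1}+\mathbf{p}$, $\mathbf{p}$ the oldest packet of the first nonempty set among $S_2,S_3,S_6$. (In Cases 3–5, if all listed sets are empty, $\mathbf{p}_{m+1}$ is sent alone.) Case 6 (otherwise): send $\mathbf{p}_{m+1}$. After feedback, update $H_i,D_i$, set $m$ to the maximum rank of the three receivers; among receivers that have decoded all of $\mathbf{p}_1,\dots,\mathbf{p}_m$, label the one with lowest index $L$ (if there is none, assign labels arbitrarily); of the other two receivers, if exactly one has nonempty unsolved set $H_i\setminus D_i$, label it $D$ and the other $N$; otherwise assign $D,N$ arbitrarily. *)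

theory Defs
  imports Complex_Main "HOL-Library.Function_Algebras"
begin

text \<open>A linear combination of packets is represented by its coefficient vector
  indexed by nat: coordinate j is the coefficient of packet p_j (j \<ge> 1).\<close>

type_synonym 'f cvec = "nat \<Rightarrow> 'f"

text \<open>Receivers are 1, 2, 3. A knowledge state K assigns to each receiver the
  set of coefficient vectors it has received; a label triple is (L, N, D).\<close>

type_synonym 'f kstate = "nat \<Rightarrow> 'f cvec set"
type_synonym labels = "nat \<times> nat \<times> nat"

definition sc :: "'f::field \<Rightarrow> 'f cvec \<Rightarrow> 'f cvec" where
  "sc c v = (\<lambda>j. c * v j)"

definition unitv :: "nat \<Rightarrow> 'f::field cvec" where
  "unitv j = (\<lambda>k. if k = j then 1 else 0)"

definition knows :: "'f::field kstate \<Rightarrow> nat \<Rightarrow> 'f cvec set" where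
  "knows K i = module.span sc (K i)"

definition rank :: "'f::field kstate \<Rightarrow> nat \<Rightarrow> nat" where
  "rank K i = vector_space.dim sc (knows K i)"

definition heard :: "'f::field kstate \<Rightarrow> nat \<Rightarrow> nat set" where
  "heard K i = {j. \<exists>v\<in>knows K i. v j \<noteq> 0}"

definition decoded :: "'f::field kstate \<Rightarrow> nat \<Rightarrow> nat set" where
  "decoded K i = {j. unitv j \<in> knows K i}"

definition unsolved :: "'f::field kstate \<Rightarrow> nat \<Rightarrow> nat set" where
  "unsolved K i = heard K i - decoded K i"

definition maxrank :: "'f::field kstate \<Rightarrow> nat" where
  "maxrank K = Max {rank K 1, rank K 2, rank K 3}"

definition oldest :: "nat set \<Rightarrow> nat" where
  "oldest S = (LEAST j. j \<in> S)"

fun firstne :: "nat set list \<Rightarrow> nat set option" where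
  "firstne [] = None"
| "firstne (S # Ss) = (if S \<noteq> {} then Some S else firstne Ss)"

text \<open>Case 1 transmission (None = send nothing).\<close>
definition case1_tx :: "nat set \<Rightarrow> nat set \<Rightarrow> nat set \<Rightarrow> nat set \<Rightarrow> nat set \<Rightarrow> 'f::field cvec option" where
  "case1_tx S2 S3 S4 S5 S6 =
    (if S2 \<noteq> {} \<and> S4 \<noteq> {} then Some (unitv (oldest S2) + unitv (oldest S4))
     else if S3 \<noteq> {} \<and> S4 \<noteq> {} then Some (unitv (oldest S3) + unitv (oldest S4))
     else (case firstne [S5, S6, S2, S3, S4] of
             None \<Rightarrow> None
           | Some S \<Rightarrow> Some (unitv (oldest S))))"

text \<open>Set of transmissions allowed by the coding module in a slot, given the
  knowledge state K, the labels (L,N,D), and the number A of packets arrived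
  so far (packets p_1..p_A have arrived). It is a set only because of the
  choice of c in Case 3 (if both c = 1, 2 are innovative).\<close>
definition tx_choices :: "'f::field kstate \<Rightarrow> labels \<Rightarrow> nat \<Rightarrow> 'f cvec option set" where
  "tx_choices K lab A =
    (case lab of (l, n, d) \<Rightarrow>
     let m = maxrank K;
         DN = decoded K n; DD = decoded K d; HD = heard K d;
         U = {1..m} \<union> (if m + 1 \<le> A then {m + 1} else {});
         S1 = DN \<inter> DD;
         S2 = DN \<inter> (HD - DD);
         S3 = DN - HD;
         S4 = DD - DN;
         S5 = (HD - DD) - DN;
         S6 = U - (HD \<union> DN);
         q = m + 1;
         P = (unitv q :: 'f cvec);
         c1 = case1_tx S2 S3 S4 S5 S6
     in if \<not> (q \<le> A) then {c1}
        else if q \<in> S1 then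
          {Some (case c1 of None \<Rightarrow> P | Some v \<Rightarrow> P + v)}
        else if q \<in> S2 then
          (case firstne [S4, S5, S6] of
             None \<Rightarrow> {Some P}
           | Some S \<Rightarrow>
               (let p = oldest S;
                    innov = (\<lambda>c::'f. P + sc c (unitv p) \<notin> knows K d)
                in if p \<in> S5 then
                     {Some (P + sc c (unitv p)) | c. c \<in> {1, 2} \<and>
                        (innov c \<or> \<not> (\<exists>c'\<in>{1, 2}. innov c'))}
                   else {Some (P + unitv p)}))
        else if q \<in> S3 then
          (case firstne [S4, S5, S6] of
             None \<Rightarrow> {Some P}
           | Some S \<Rightarrow> {Some (P + unitv (oldest S))})
        else if q \<in> S4 then
          (case firstne [S2, S3, S6] of
             None \<Rightarrow> {Some P}
           | Some S \<Rightarrow> {Some (P + unitv (oldest S))})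
        else {Some P})"

definition valid_labels :: "'f::field kstate \<Rightarrow> labels \<Rightarrow> bool" where
  "valid_labels K lab =
    (case lab of (l, n, d) \<Rightarrow>
      {l, n, d} = {1, 2, 3} \<and>
      (let C = {i \<in> {1, 2, 3}. {1..maxrank K} \<subseteq> decoded K i} in
        C \<noteq> {} \<longrightarrow>
          l = Min C \<and>
          ((unsolved K n = {}) \<noteq> (unsolved K d = {}) \<longrightarrow> unsolved K d \<noteq> {})))"

text \<open>One slot: A = number of packets arrived, rcv i = receiver i receives
  (no erasure). State = (knowledge, labels) at the beginning of the slot.\<close>
definition step :: "nat \<Rightarrow> (nat \<Rightarrow> bool) \<Rightarrow> 'f::field kstate \<times> labels \<Rightarrow> 'f kstate \<times> labels \<Rightarrow> bool" where
  "step A rcv st st' =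
    (\<exists>x \<in> tx_choices (fst st) (snd st) A.
       fst st' = (\<lambda>i. if rcv i then fst st i \<union> set_option x else fst st i) \<and>
       valid_labels (fst st') (snd st'))"

end

theory Submission
  imports Defs
begin

lemma vs_sc: "vector_space (sc :: 'f::field \<Rightarrow> 'f cvec \<Rightarrow> 'f cvec)"
  by unfold_locales (auto simp: sc_def fun_eq_iff algebra_simps)

interpretation V: vector_space "sc :: 'f::field \<Rightarrow> 'f cvec \<Rightarrow> 'f cvec"
  by (rule vs_sc)

context vector_space begin
lemma dim_mono_fin:
  assumes "A \<subseteq> B" "B \<subseteq> span W" "finite W"
  shows "dim A \<le> dim B"
proof -
  obtain BA where BA: "BA \<subseteq> A" "independent BA" "A \<subseteq> span BA" "card BA = dim A"
    by (rule basis_exists)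
  obtain BB where BB: "BB \<subseteq> B" "independent BB" "B \<subseteq> span BB" "card BB = dim B"
    by (rule basis_exists)
  have "BB \<subseteq> span W" using BB assms by blast
  then have fBB: "finite BB" using independent_span_bound[OF assms(3) BB(2)] by blast
  have "BA \<subseteq> span BB" using BA BB assms by blast
  then have "card BA \<le> card BB" using independent_span_bound[OF fBB BA(2)] by blast
  then show ?thesis using BA BB by simp
qed

lemma full_dim:
  assumes "A \<subseteq> span W" "finite W" "card W \<le> dim A"
  shows "W \<subseteq> span A"
proof
  fix w assume w: "w \<in> W"
  show "w \<in> span A"
  proof (rule ccontr)
    assume nw: "w \<notin> span A"
    obtain BA where BA: "BA \<subseteq> A" "independent BA" "A \<subseteq> span BA" "card BA = dim A"
      by (rule basis_exists)
    have "span BA \<subseteq> span A" using BA(1) by (rule span_mono)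
    with nw have nw': "w \<notin> span BA" by blast
    then have wn: "w \<notin> BA" using span_base by blast
    have ind: "independent (insert w BA)" using independent_insertI[OF nw' BA(2)] .
    have sub: "insert w BA \<subseteq> span W" using w BA assms span_base by blast
    have fin: "finite (insert w BA)" and cd: "card (insert w BA) \<le> card W"
      using independent_span_bound[OF assms(2) ind sub] by auto
    have fBA: "finite BA" using fin by simp
    have "card (insert w BA) = Suc (card BA)" using card_insert_disjoint[OF fBA wn] .
    with cd BA(4) assms(3) show False by linarith
  qed
qed
end

definition Sp :: "nat \<Rightarrow> 'f::field cvec set" where
  "Sp k = V.span (unitv ` {1..k})"

definition Sup :: "nat \<Rightarrow> 'f::field cvec set" where
  "Sup k = {v. \<forall>j. j \<notin> {1..k} \<longrightarrow> v j = 0}"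

lemma subspace_Sup: "module.subspace sc (Sup k)"
  unfolding V.subspace_def Sup_def sc_def by simp

lemma unit_Sup: "unitv ` {1..k} \<subseteq> Sup k"
  by (auto simp: Sup_def unitv_def)

lemma Sp_Sup: "Sp k \<subseteq> Sup k"
  unfolding Sp_def by (rule V.span_minimal[OF unit_Sup subspace_Sup])

lemma Sp_support: "v \<in> Sp k \<Longrightarrow> v j \<noteq> 0 \<Longrightarrow> j \<in> {1..k}"
  using Sp_Sup unfolding Sup_def by blast

lemma unitv_Sp: "j \<in> {1..k} \<Longrightarrow> unitv j \<in> Sp k"
  unfolding Sp_def by (rule V.span_base) blast

lemma knows_Sp: "K i \<subseteq> Sp k \<Longrightarrow> knows K i \<subseteq> Sp k"
  unfolding knows_def Sp_def by (rule V.span_minimal) auto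

lemma heard_Sp: "K i \<subseteq> Sp k \<Longrightarrow> heard K i \<subseteq> {1..k}"
  using knows_Sp Sp_support unfolding heard_def by blast

lemma decoded_heard: "decoded K i \<subseteq> heard K i"
  unfolding decoded_def heard_def by (force simp: unitv_def)

lemma oldest_in: "S \<noteq> {} \<Longrightarrow> oldest S \<in> S"
  unfolding oldest_def by (metis LeastI ex_in_conv)

lemma firstne_Some: "firstne L = Some S \<Longrightarrow> S \<in> set L \<and> S \<noteq> {}"
  by (induction L) (auto split: if_splits)

lemma old_Sp: "S \<subseteq> {1..k} \<Longrightarrow> S \<noteq> {} \<Longrightarrow> unitv (oldest S) \<in> Sp k"
  using oldest_in unitv_Sp by blast

lemma Sp_add: "x \<in> Sp k \<Longrightarrow> y \<in> Sp k \<Longrightarrow> x + y \<in> Sp k"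
  unfolding Sp_def by (rule V.span_add)
lemma Sp_sc: "x \<in> Sp k \<Longrightarrow> sc c x \<in> Sp k"
  unfolding Sp_def by (rule V.span_scale)

lemma firstne_sub:
  assumes "firstne L = Some S" "\<forall>X\<in>set L. X \<subseteq> B"
  shows "S \<subseteq> B \<and> S \<noteq> {}"
proof -
  have S: "S \<in> set L" "S \<noteq> {}" using firstne_Some[OF assms(1)] by auto
  have "S \<subseteq> B" using bspec[OF assms(2) S(1)] .
  then show ?thesis using S(2) by simp
qed

lemma case1_Sp:
  assumes v: "case1_tx S2 S3 S4 S5 S6 = Some v"
    and ss: "S2 \<subseteq> {1..k}" "S3 \<subseteq> {1..k}" "S4 \<subseteq> {1..k}" "S5 \<subseteq> {1..k}" "S6 \<subseteq> {1..k}"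
  shows "v \<in> Sp k"
proof (cases "S2 \<noteq> {} \<and> S4 \<noteq> {}")
  case True
  then have "v = unitv (oldest S2) + unitv (oldest S4)" using v unfolding case1_tx_def by simp
  then show ?thesis using True ss by (simp add: Sp_add old_Sp)
next
  case F1: False
  show ?thesis
  proof (cases "S3 \<noteq> {} \<and> S4 \<noteq> {}")
    case True
    then have "v = unitv (oldest S3) + unitv (oldest S4)" using v F1 unfolding case1_tx_def by simp
    then show ?thesis using True ss by (simp add: Sp_add old_Sp)
  next
    case F2: False
    then have "(case firstne [S5, S6, S2, S3, S4] of None \<Rightarrow> None
           | Some S \<Rightarrow> Some (unitv (oldest S))) = Some v"
      using v F1 F2 unfolding case1_tx_def by (simp del: firstne.simps)
    then obtain S where S: "firstne [S5, S6, S2, S3, S4] = Some S" and vS: "v = unitv (oldest S)"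
      by (auto simp del: firstne.simps split: option.splits)
    have all: "\<forall>X\<in>set [S5, S6, S2, S3, S4]. X \<subseteq> {1..k}" using ss by simp
    have "S \<subseteq> {1..k} \<and> S \<noteq> {}" using firstne_sub[OF S all] .
    then show ?thesis using vS old_Sp by blast
  qed
qed

lemma tx_Sp:
  assumes K: "\<forall>i. K i \<subseteq> Sp (maxrank K + 1)" and v: "Some v \<in> tx_choices K lab A"
  shows "v \<in> Sp (maxrank K + 1)"
proof -
  obtain l n d where lab: "lab = (l, n, d)" by (cases lab) auto
  define k where "k = maxrank K + 1"
  define m where "m = maxrank K"
  define DN where "DN = decoded K n"
  define DD where "DD = decoded K d"
  define HD where "HD = heard K d"
  define U where "U = {1..m} \<union> (if m + 1 \<le> A then {m + 1} else {})"
  define S1 where "S1 = DN \<inter> DD"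
  define S2 where "S2 = DN \<inter> (HD - DD)"
  define S3 where "S3 = DN - HD"
  define S4 where "S4 = DD - DN"
  define S5 where "S5 = (HD - DD) - DN"
  define S6 where "S6 = U - (HD \<union> DN)"
  define q where "q = m + 1"
  define P where "P = (unitv q :: 'a cvec)"
  define c1 where "c1 = (case1_tx S2 S3 S4 S5 S6 :: 'a cvec option)"
  have tx: "tx_choices K lab A =
     (if \<not> (q \<le> A) then {c1}
        else if q \<in> S1 then
          {Some (case c1 of None \<Rightarrow> P | Some v \<Rightarrow> P + v)}
        else if q \<in> S2 then
          (case firstne [S4, S5, S6] of
             None \<Rightarrow> {Some P}
           | Some S \<Rightarrow>
               (let p = oldest S;
                    innov = (\<lambda>c::'a. P + sc c (unitv p) \<notin> knows K d)
                in if p \<in> S5 then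
                     {Some (P + sc c (unitv p)) | c. c \<in> {1, 2} \<and>
                        (innov c \<or> \<not> (\<exists>c'\<in>{1, 2}. innov c'))}
                   else {Some (P + unitv p)}))
        else if q \<in> S3 then
          (case firstne [S4, S5, S6] of
             None \<Rightarrow> {Some P}
           | Some S \<Rightarrow> {Some (P + unitv (oldest S))})
        else if q \<in> S4 then
          (case firstne [S2, S3, S6] of
             None \<Rightarrow> {Some P}
           | Some S \<Rightarrow> {Some (P + unitv (oldest S))})
        else {Some P})"
    unfolding tx_choices_def lab Let_def m_def DN_def DD_def HD_def U_def S1_def S2_def S3_def
      S4_def S5_def S6_def q_def P_def c1_def by simp
  have Kd: "K d \<subseteq> Sp k" and Kn: "K n \<subseteq> Sp k" using K unfolding k_def by simp_all
  have H1: "HD \<subseteq> {1..k}" unfolding HD_def by (rule heard_Sp[of K d k, OF Kd])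
  have H2: "DD \<subseteq> {1..k}" unfolding DD_def by (rule subset_trans[OF decoded_heard heard_Sp[of K d k, OF Kd]])
  have H3: "DN \<subseteq> {1..k}" unfolding DN_def by (rule subset_trans[OF decoded_heard heard_Sp[of K n k, OF Kn]])
  have Uk: "U \<subseteq> {1..k}" unfolding U_def k_def m_def by auto
  have Ss: "S2 \<subseteq> {1..k}" "S3 \<subseteq> {1..k}" "S4 \<subseteq> {1..k}" "S5 \<subseteq> {1..k}" "S6 \<subseteq> {1..k}"
  proof -
    show "S2 \<subseteq> {1..k}" unfolding S2_def using H3 by (rule subset_trans[rotated]) blast
    show "S3 \<subseteq> {1..k}" unfolding S3_def using H3 by (rule subset_trans[rotated]) blast
    show "S4 \<subseteq> {1..k}" unfolding S4_def using H2 by (rule subset_trans[rotated]) blast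
    show "S5 \<subseteq> {1..k}" unfolding S5_def using H1 by (rule subset_trans[rotated]) blast
    show "S6 \<subseteq> {1..k}" unfolding S6_def using Uk by (rule subset_trans[rotated]) blast
  qed
  have Pk: "P \<in> Sp k" unfolding P_def q_def k_def m_def by (rule unitv_Sp) simp
  have c1k: "w \<in> Sp k" if "c1 = Some w" for w
    using case1_Sp[OF that[unfolded c1_def] Ss] .
  have fs1: "unitv (oldest S) \<in> Sp k" if "firstne [S4, S5, S6] = Some S" for S
  proof -
    have "S \<subseteq> {1..k} \<and> S \<noteq> {}" using firstne_sub[OF that, of "{1..k}"] Ss by simp
    then show ?thesis using old_Sp by blast
  qed
  have fs2: "unitv (oldest S) \<in> Sp k" if "firstne [S2, S3, S6] = Some S" for S
  proof -
    have "S \<subseteq> {1..k} \<and> S \<noteq> {}" using firstne_sub[OF that, of "{1..k}"] Ss by simp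
    then show ?thesis using old_Sp by blast
  qed
  have "v \<in> Sp k"
  proof (cases "q \<le> A")
    case False
    then show ?thesis using v c1k unfolding tx by simp
  next
    case qA: True
    show ?thesis
    proof (cases "q \<in> S1")
      case True
      then show ?thesis using v qA c1k Pk Sp_add unfolding tx by (auto split: option.splits)
    next
      case nS1: False
      show ?thesis
      proof (cases "q \<in> S2")
        case True
        show ?thesis
        proof (cases "firstne [S4, S5, S6]")
          case None
          then show ?thesis using v qA nS1 True Pk unfolding tx by simp
        next
          case (Some S)
          have u: "unitv (oldest S) \<in> Sp k" using fs1[OF Some] .
          from v qA nS1 True Some have
            "\<exists>c. v = P + sc c (unitv (oldest S)) \<or> v = P + unitv (oldest S)"
            unfolding tx Let_def by (auto split: if_splits)
          then show ?thesis using u Pk Sp_add Sp_sc by blast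
        qed
      next
        case nS2: False
        show ?thesis
        proof (cases "q \<in> S3")
          case True
          then show ?thesis using v qA nS1 nS2 Pk fs1 Sp_add unfolding tx
            by (auto split: option.splits)
        next
          case nS3: False
          show ?thesis
          proof (cases "q \<in> S4")
            case True
            then show ?thesis using v qA nS1 nS2 nS3 Pk fs2 Sp_add unfolding tx
              by (auto split: option.splits)
          next
            case False
            then show ?thesis using v qA nS1 nS2 nS3 Pk unfolding tx by simp
          qed
        qed
      qed
    qed
  qed
  then show ?thesis unfolding k_def .
qed


definition Inv :: "'f::field kstate \<Rightarrow> bool" where
  "Inv K = ((\<forall>i. K i \<subseteq> Sp (maxrank K + 1)) \<and> (\<exists>i\<in>{1, 2, 3}. {1..maxrank K} \<subseteq> decoded K i))"

lemma Sp_mono: "k \<le> k' \<Longrightarrow> Sp k \<subseteq> Sp k'"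
  unfolding Sp_def by (rule V.span_mono) auto

lemma rank_le: fixes K :: "'f::field kstate" shows "K i \<subseteq> Sp k \<Longrightarrow> rank K i \<le> k"
proof -
  assume a: "K i \<subseteq> Sp k"
  have "knows K i \<subseteq> V.span (unitv ` {1..k})" using knows_Sp[of K i k, OF a] unfolding Sp_def .
  then have "rank K i \<le> card (unitv ` {1..k} :: 'f cvec set)" unfolding rank_def using V.dim_le_card finite_atLeastAtMost finite_imageI by metis
  also have "\<dots> \<le> card {1..k}" by (rule card_image_le) simp
  finally show ?thesis by simp
qed

lemma rank_mono: "K i \<subseteq> K' j \<Longrightarrow> K' j \<subseteq> Sp k \<Longrightarrow> rank K i \<le> rank K' j"
proof -
  assume a: "K i \<subseteq> K' j" and b: "K' j \<subseteq> Sp k"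
  have "knows K i \<subseteq> knows K' j" unfolding knows_def by (rule V.span_mono[OF a])
  moreover have "knows K' j \<subseteq> V.span (unitv ` {1..k})" using knows_Sp[of K' j k, OF b] unfolding Sp_def .
  ultimately show ?thesis unfolding rank_def using V.dim_mono_fin finite_atLeastAtMost finite_imageI by metis
qed

lemma full_rank: fixes K :: "'f::field kstate" shows "K i \<subseteq> Sp k \<Longrightarrow> rank K i = k \<Longrightarrow> {1..k} \<subseteq> decoded K i"
proof -
  assume a: "K i \<subseteq> Sp k" and r: "rank K i = k"
  have kn: "knows K i \<subseteq> V.span (unitv ` {1..k})" using knows_Sp[of K i k, OF a] unfolding Sp_def .
  have c: "card (unitv ` {1..k} :: 'f cvec set) \<le> V.dim (knows K i)"
  proof -
    have "card (unitv ` {1..k} :: 'f cvec set) \<le> card {1..k}" by (rule card_image_le) simp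
    then show ?thesis using r unfolding rank_def by simp
  qed
  have "unitv ` {1..k} \<subseteq> V.span (knows K i)" using V.full_dim[OF kn _ c] by simp
  then have "unitv ` {1..k} \<subseteq> knows K i" unfolding knows_def V.span_span .
  then show ?thesis unfolding decoded_def by auto
qed

lemma decoded_mono: "K i \<subseteq> K' i \<Longrightarrow> decoded K i \<subseteq> decoded K' i"
  unfolding decoded_def knows_def using V.span_mono by blast

lemma maxrank_cases: "\<exists>i\<in>{1, 2, 3}. rank K i = maxrank K"
  unfolding maxrank_def by (auto simp: max_def)

lemma rank_le_maxrank: "i \<in> {1, 2, 3} \<Longrightarrow> rank K i \<le> maxrank K"
  unfolding maxrank_def by auto

lemma Inv_step:
  assumes I: "Inv K" and x: "x \<in> tx_choices K lab A"
    and K': "K' = (\<lambda>i. if rcv i then K i \<union> set_option x else K i)"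
  shows "Inv K'"
proof -
  define k where "k = maxrank K + 1"
  have KS: "\<forall>i. K i \<subseteq> Sp k" using I unfolding Inv_def k_def by blast
  have xS: "set_option x \<subseteq> Sp k"
  proof
    fix v assume "v \<in> set_option x"
    then have "x = Some v" by simp
    then show "v \<in> Sp k" using tx_Sp[of K v lab A] KS x unfolding k_def by simp
  qed
  have K'S: "\<forall>i. K' i \<subseteq> Sp k" using KS xS unfolding K' by auto
  have sub: "\<forall>i. K i \<subseteq> K' i" unfolding K' by auto
  have lo: "maxrank K \<le> maxrank K'"
  proof -
    obtain i where i: "i \<in> {1, 2, 3}" "rank K i = maxrank K" using maxrank_cases[of K] by blast
    have "rank K i \<le> rank K' i" using rank_mono[of K i K' i k] sub K'S by simp
    also have "\<dots> \<le> maxrank K'" using rank_le_maxrank[OF i(1)] .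
    finally show ?thesis using i by simp
  qed
  have hi: "maxrank K' \<le> k"
  proof -
    obtain i where i: "i \<in> {1, 2, 3}" "rank K' i = maxrank K'" using maxrank_cases[of K'] by blast
    show ?thesis using rank_le[of K' i k] K'S i by simp
  qed
  show ?thesis
  proof (cases "maxrank K' = maxrank K")
    case True
    obtain i where i: "i \<in> {1, 2, 3}" "{1..maxrank K} \<subseteq> decoded K i" using I unfolding Inv_def by blast
    have d: "{1..maxrank K'} \<subseteq> decoded K' i" using i decoded_mono[of K i K'] sub True by auto
    have a: "\<forall>j. K' j \<subseteq> Sp (maxrank K' + 1)" using K'S True unfolding k_def by simp
    have b: "\<exists>i\<in>{1, 2, 3}. {1..maxrank K'} \<subseteq> decoded K' i" using d i(1) by blast
    show ?thesis unfolding Inv_def using a b by (rule conjI)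
  next
    case False
    then have eq: "maxrank K' = k" using lo hi unfolding k_def by simp
    obtain i where i: "i \<in> {1, 2, 3}" "rank K' i = maxrank K'" using maxrank_cases[of K'] by blast
    have "{1..k} \<subseteq> decoded K' i" using full_rank[of K' i k] K'S i eq by simp
    moreover have "\<forall>j. K' j \<subseteq> Sp (maxrank K' + 1)" using K'S Sp_mono[of k "k + 1"] eq by auto
    ultimately show ?thesis unfolding Inv_def using i(1) eq by (intro conjI) (simp, blast)
  qed
qed

lemma Inv_0: "Inv ((\<lambda>i. {}) :: 'f::field kstate)"
proof -
  have "\<And>i. rank ((\<lambda>i. {}) :: 'f kstate) i = 0"
    unfolding rank_def knows_def V.dim_span using V.dim_eq_card_independent[OF V.independent_empty] by simp
  then have "maxrank ((\<lambda>i. {}) :: 'f kstate) = 0" unfolding maxrank_def by simp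
  then show ?thesis unfolding Inv_def by (simp, blast)
qed

theorem theorem11:
  fixes arr :: "nat \<Rightarrow> nat"
    and rcv :: "nat \<Rightarrow> nat \<Rightarrow> bool"
    and s :: "nat \<Rightarrow> ('f::{field, finite}) kstate \<times> labels"
    and t :: nat
  assumes "card (UNIV :: 'f set) = 3"
    and "mono arr"
    and "s 0 = ((\<lambda>i. {}), (1, 2, 3))"
    and "\<forall>k. step (arr k) (rcv k) (s k) (s (Suc k))"
    and "t > 0"
  shows "\<exists>i\<in>{1, 2, 3}. {1..maxrank (fst (s t))} \<subseteq> decoded (fst (s t)) i"
proof -
  have "Inv (fst (s n))" for n
  proof (induction n)
    case 0
    then show ?case using assms(3) Inv_0 by simp
  next
    case (Suc n)
    from assms(4) have "step (arr n) (rcv n) (s n) (s (Suc n))" by blast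
    then obtain x where x: "x \<in> tx_choices (fst (s n)) (snd (s n)) (arr n)"
      and e: "fst (s (Suc n)) = (\<lambda>i. if rcv n i then fst (s n) i \<union> set_option x else fst (s n) i)"
      unfolding step_def by blast
    show ?case using Inv_step[OF Suc.IH x e] .
  qed
  then show ?thesis unfolding Inv_def by blast
qed

end
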